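(* Let $\mathcal{U}\subseteq\mathbb{R}^n$ be a domain and $F=u\,\phi(r,s)$ a spherically symmetric Finsler metric on $\mathcal{U}$, where $u=|y|$, $r=|x|$, $s=\langle x,y\rangle/|y|$ and $\phi$ is smooth. Then the Cartan torsion of $F$ can be written as $$C_{ijk}=\frac{\mathcal{P}}{n+1}\big\{h_{ij}I_k+h_{jk}I_i+h_{ki}I_j\big\}+\frac{\mathcal{Q}}{\|\mathbf{I}\|^2}I_iI_jI_k,$$ where $$\mathcal{P}=\frac{(n+1)\big[(\phi-s\phi_s)\phi_s-s\phi\phi_{ss}\big]\big[\phi-s\phi_s+(r^2-s^2)\phi_{ss}\big]}{(n+1)\big[(\phi-s\phi_s)\phi_s-s\phi\phi_{ss}\big]\big[\phi-s\phi_s+(r^2-s^2)\phi_{ss}\big]+(r^2-s^2)\big[(\phi-s\phi_s)\phi_{sss}+3s\phi_{ss}^2\big]\phi},$$ $$\mathcal{Q}=\frac{(r^2-s^2)\big[(\phi-s\phi_s)\phi_{sss}+3s\phi_{ss}^2\big]\phi^2}{(n+1)\big[(\phi-s\phi_s)\phi_s-s\phi\phi_{ss}\big]\big[\phi-s\phi_s+(r^2-s^2)\phi_{ss}\big]\phi+(r^2-s^2)\big[(\phi-s\phi_s)\phi_{sss}+3s\phi_{ss}^2\big]\phi^2}.$$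
   Context: Here $|\cdot|$, $\langle\cdot,\cdot\rangle$ are the Euclidean norm and inner product; subscripts $s$ denote partial derivatives in $s$. For a Finsler metric $F$: $g_{ij}=\tfrac12(F^2)_{y^iy^j}$, $(g^{ij})$ its inverse, $C_{ijk}=\tfrac12\partial g_{ij}/\partial y^k$ the Cartan torsion, $I_i=g^{jk}C_{ijk}$ the mean Cartan torsion, $\|\mathbf{I}\|^2=g^{ij}I_iI_j$, and $h_{ij}=g_{ij}-F_{y^i}F_{y^j}$ the angular metric. *)

theory Defs
  imports "HOL-Analysis.Analysis"
begin

fun Ck_on :: "nat \<Rightarrow> 'a::euclidean_space set \<Rightarrow> ('a \<Rightarrow> real) \<Rightarrow> bool" where
  "Ck_on 0 S f = continuous_on S f"
| "Ck_on (Suc k) S f =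
     (\<exists>f'. (\<forall>z\<in>S. (f has_derivative f' z) (at z)) \<and> (\<forall>v\<in>Basis. Ck_on k S (\<lambda>z. f' z v)))"

definition smooth_on :: "'a::euclidean_space set \<Rightarrow> ('a \<Rightarrow> real) \<Rightarrow> bool" where
  "smooth_on S f \<longleftrightarrow> open S \<and> (\<forall>k. Ck_on k S f)"

definition pd :: "(real^'n \<Rightarrow> real) \<Rightarrow> 'n \<Rightarrow> real^'n \<Rightarrow> real" where
  "pd f i y = deriv (\<lambda>t. f (y + t *\<^sub>R axis i 1)) 0"

definition dS :: "(real \<Rightarrow> real \<Rightarrow> real) \<Rightarrow> real \<Rightarrow> real \<Rightarrow> real" where
  "dS phi r s = deriv (\<lambda>t. phi r t) s"

definition fund_g :: "(real^'n \<Rightarrow> real^'n \<Rightarrow> real) \<Rightarrow> real^'n \<Rightarrow> real^'n \<Rightarrow> 'n \<Rightarrow> 'n \<Rightarrow> real" where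
  "fund_g F x y i j = 1/2 * pd (\<lambda>w. pd (\<lambda>v. (F x v)^2) j w) i y"

definition fund_g_mat :: "(real^'n \<Rightarrow> real^'n \<Rightarrow> real) \<Rightarrow> real^'n \<Rightarrow> real^'n \<Rightarrow> real^'n^'n" where
  "fund_g_mat F x y = (\<chi> i j. fund_g F x y i j)"

definition fund_g_inv :: "(real^'n \<Rightarrow> real^'n \<Rightarrow> real) \<Rightarrow> real^'n \<Rightarrow> real^'n \<Rightarrow> 'n \<Rightarrow> 'n \<Rightarrow> real" where
  "fund_g_inv F x y i j = matrix_inv (fund_g_mat F x y) $ i $ j"

definition cartan :: "(real^'n \<Rightarrow> real^'n \<Rightarrow> real) \<Rightarrow> real^'n \<Rightarrow> real^'n \<Rightarrow> 'n \<Rightarrow> 'n \<Rightarrow> 'n \<Rightarrow> real" where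
  "cartan F x y i j k = 1/2 * pd (\<lambda>w. fund_g F x w i j) k y"

definition mean_cartan :: "(real^'n \<Rightarrow> real^'n \<Rightarrow> real) \<Rightarrow> real^'n \<Rightarrow> real^'n \<Rightarrow> 'n \<Rightarrow> real" where
  "mean_cartan F x y i = (\<Sum>j\<in>UNIV. \<Sum>k\<in>UNIV. fund_g_inv F x y j k * cartan F x y i j k)"

definition mean_cartan_norm2 :: "(real^'n \<Rightarrow> real^'n \<Rightarrow> real) \<Rightarrow> real^'n \<Rightarrow> real^'n \<Rightarrow> real" where
  "mean_cartan_norm2 F x y =
     (\<Sum>i\<in>UNIV. \<Sum>j\<in>UNIV. fund_g_inv F x y i j * mean_cartan F x y i * mean_cartan F x y j)"

definition angular :: "(real^'n \<Rightarrow> real^'n \<Rightarrow> real) \<Rightarrow> real^'n \<Rightarrow> real^'n \<Rightarrow> 'n \<Rightarrow> 'n \<Rightarrow> real" where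
  "angular F x y i j = fund_g F x y i j - pd (F x) i y * pd (F x) j y"

text \<open>F is a Finsler metric on U: smooth on U x (R^n - 0) (here: guaranteed by the
  smoothness hypothesis on phi for the spherically symmetric F below), positive,
  positively 1-homogeneous in y, with positive definite fundamental tensor.\<close>
definition finsler_metric :: "(real^'n) set \<Rightarrow> (real^'n \<Rightarrow> real^'n \<Rightarrow> real) \<Rightarrow> bool" where
  "finsler_metric U F \<longleftrightarrow>
     (\<forall>x\<in>U. \<forall>y. y \<noteq> 0 \<longrightarrow> F x y > 0) \<and>
     (\<forall>x\<in>U. \<forall>y. \<forall>c>0. F x (c *\<^sub>R y) = c * F x y) \<and>
     (\<forall>x\<in>U. \<forall>y. y \<noteq> 0 \<longrightarrow>
        (\<forall>v. v \<noteq> 0 \<longrightarrow> (\<Sum>i\<in>UNIV. \<Sum>j\<in>UNIV. fund_g F x y i j * v $ i * v $ j) > 0))"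

definition sph_sym :: "(real \<Rightarrow> real \<Rightarrow> real) \<Rightarrow> real^'n \<Rightarrow> real^'n \<Rightarrow> real" where
  "sph_sym phi x y = norm y * phi (norm x) (inner x y / norm y)"

end

theory Submission
  imports Defs
begin

lemma Ck_on_cong:
  assumes "open S" "\<And>z. z \<in> S \<Longrightarrow> f z = g z"
  shows "Ck_on k S f = Ck_on k S g"
  using assms
proof (induction k arbitrary: f g)
  case 0
  have "continuous_on S f = continuous_on S g" by (rule continuous_on_cong[OF refl]) (use 0 in auto)
  then show ?case by simp
next
  case (Suc k)
  have "(\<forall>z\<in>S. (f has_derivative f' z) (at z)) = (\<forall>z\<in>S. (g has_derivative f' z) (at z))" for f'
    using Suc.prems by (metis has_derivative_transform_within_open)
  then show ?case by simp
qed

lemma Ck_dS: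
  assumes "open D" "Ck_on (Suc k) D (\<lambda>(r, s). f r s)"
  shows "(\<forall>r t. (r, t) \<in> D \<longrightarrow> (f r has_real_derivative dS f r t) (at t))
     \<and> Ck_on k D (\<lambda>(r, s). dS f r s)"
proof -
  obtain f' where f': "\<forall>z\<in>D. ((\<lambda>(r, s). f r s) has_derivative f' z) (at z)"
    and ck: "\<forall>v\<in>Basis. Ck_on k D (\<lambda>z. f' z v)"
    using assms(2) by auto
  have der: "(f r has_real_derivative f' (r, t) (0, 1)) (at t)" if "(r, t) \<in> D" for r t
  proof -
    have l: "((\<lambda>t. (r, t)) has_derivative (\<lambda>h. (0, h))) (at t)"
      by (auto intro!: derivative_eq_intros)
    have "((\<lambda>(r, s). f r s) has_derivative f' (r, t)) (at (r, t))" using f' that by auto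
    from has_derivative_compose[OF l this]
    have "((\<lambda>t. f r t) has_derivative (\<lambda>h. f' (r, t) (0, h))) (at t)" by simp
    moreover have "linear (f' (r, t))" using f' that has_derivative_linear by blast
    hence "f' (r, t) (0, h) = h * f' (r, t) (0, 1)" for h
      using linear_scale[of "f' (r,t)" h "(0,1)"] by simp
    hence "(\<lambda>h. f' (r, t) (0, h)) = (\<lambda>h. h * f' (r, t) (0, 1))" by (intro ext) 
    hence "(\<lambda>h. f' (r, t) (0, h)) = (*) (f' (r, t) (0, 1))" by (simp only: mult_commute_abs)
    ultimately show ?thesis unfolding has_field_derivative_def by simp
  qed
  have eq: "dS f r t = f' (r, t) (0, 1)" if "(r, t) \<in> D" for r t
    unfolding dS_def using der[OF that] by (rule DERIV_imp_deriv)
  have "(0::real, 1::real) \<in> Basis" by (simp add: Basis_prod_def)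
  hence "Ck_on k D (\<lambda>z. f' z (0, 1))" using ck by auto
  moreover have "Ck_on k D (\<lambda>z. f' z (0, 1)) = Ck_on k D (\<lambda>(r, s). dS f r s)"
    by (rule Ck_on_cong[OF assms(1)]) (auto simp: eq)
  ultimately show ?thesis using der eq by auto
qed

lemma smooth_phi_derivs:
  assumes "smooth_on D (\<lambda>(r, s). phi r s)" "(r, t) \<in> D"
  shows "(phi r has_real_derivative dS phi r t) (at t)"
    "(dS phi r has_real_derivative dS (dS phi) r t) (at t)"
    "(dS (dS phi) r has_real_derivative dS (dS (dS phi)) r t) (at t)"
proof -
  have o: "open D" and c: "Ck_on 3 D (\<lambda>(r, s). phi r s)" using assms(1) unfolding smooth_on_def by auto
  from Ck_dS[OF o, of 2 phi] c have 1: "Ck_on 2 D (\<lambda>(r, s). dS phi r s)"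
    and "(phi r has_real_derivative dS phi r t) (at t)" using assms(2) by (auto simp: numeral_eq_Suc)
  then show "(phi r has_real_derivative dS phi r t) (at t)" by simp
  from Ck_dS[OF o, of 1 "dS phi"] 1 have 2: "Ck_on 1 D (\<lambda>(r, s). dS (dS phi) r s)"
    and "(dS phi r has_real_derivative dS (dS phi) r t) (at t)" using assms(2) by (auto simp: numeral_eq_Suc)
  then show "(dS phi r has_real_derivative dS (dS phi) r t) (at t)" by simp
  from Ck_dS[OF o, of 0 "dS (dS phi)"] 2 
  show "(dS (dS phi) r has_real_derivative dS (dS (dS phi)) r t) (at t)" using assms(2) by auto
qed


lemma pd_eq:
  assumes "(G has_derivative G') (at y)"
  shows "pd G i y = G' (axis i 1)"
proof -
  have l: "((\<lambda>t. y + t *\<^sub>R axis i 1) has_derivative (\<lambda>h. h *\<^sub>R axis i 1)) (at 0)"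
    by (auto intro!: derivative_eq_intros)
  have "((\<lambda>t. G (y + t *\<^sub>R axis i 1)) has_derivative (\<lambda>h. G' (h *\<^sub>R axis i 1))) (at 0)"
    using has_derivative_compose[OF l] assms by simp
  moreover have "linear G'" using assms has_derivative_linear by blast
  ultimately have "((\<lambda>t. G (y + t *\<^sub>R axis i 1)) has_real_derivative G' (axis i 1)) (at 0)"
    unfolding has_field_derivative_def by (simp add: linear_scale mult_commute_abs)
  then show ?thesis unfolding pd_def by (rule DERIV_imp_deriv)
qed

lemma pd_cong:
  assumes "open T" "y \<in> T" "\<And>w. w \<in> T \<Longrightarrow> G w = H w"
  shows "pd G i y = pd H i y"
proof -
  have o: "open ((\<lambda>t. y + t *\<^sub>R axis i (1::real)) -` T)"
    by (rule open_vimage[OF assms(1)]) (intro continuous_intros)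
  have "eventually (\<lambda>t. t \<in> (\<lambda>t. y + t *\<^sub>R axis i (1::real)) -` T) (nhds 0)"
    by (rule eventually_nhds_in_open[OF o]) (use assms(2) in simp)
  hence "eventually (\<lambda>t. G (y + t *\<^sub>R axis i 1) = H (y + t *\<^sub>R axis i 1)) (nhds 0)"
    by (rule eventually_mono) (use assms(3) in auto)
  then show ?thesis unfolding pd_def by (rule deriv_cong_ev) simp
qed

definition Sf :: "real^'n \<Rightarrow> real^'n \<Rightarrow> real" where "Sf x w = inner x w / norm w"

lemma Sf_bound: "\<bar>Sf x w\<bar> \<le> norm x"
  unfolding Sf_def
  by (cases "w = 0") (auto simp: divide_le_eq abs_divide Cauchy_Schwarz_ineq2)

lemma Sf_deriv: "w \<noteq> 0 \<Longrightarrow> (Sf x has_derivative (\<lambda>h. (inner x h - Sf x w * inner w h / norm w) / norm w)) (at w)"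
  unfolding Sf_def
  apply (rule has_derivative_eq_rhs)
   apply (rule derivative_intros has_derivative_norm | simp)+
  apply (rule ext)
  apply (simp add: field_simps sgn_div_norm inner_commute power2_eq_square)
  done

lemma real_chain:
  assumes "(f has_real_derivative f') (at (g w))" "(g has_derivative g') (at w)"
  shows "((\<lambda>w. f (g w)) has_derivative (\<lambda>h. f' * g' h)) (at w)"
  using has_derivative_compose[OF assms(2) assms(1)[unfolded has_field_derivative_def]]
  by (simp add: mult.commute)

lemma vnth_deriv: "((\<lambda>w. w $ j) has_derivative (\<lambda>h. h $ j)) (at (w::real^'n))"
  by (rule bounded_linear_imp_has_derivative) (rule bounded_linear_vec_nth)

context
  fixes x :: "real^'n" and f0 f1 f2 f3 :: "real \<Rightarrow> real"
  assumes d0: "\<And>t. \<bar>t\<bar> \<le> norm x \<Longrightarrow> (f0 has_real_derivative f1 t) (at t)"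
    and d1: "\<And>t. \<bar>t\<bar> \<le> norm x \<Longrightarrow> (f1 has_real_derivative f2 t) (at t)"
    and d2: "\<And>t. \<bar>t\<bar> \<le> norm x \<Longrightarrow> (f2 has_real_derivative f3 t) (at t)"
begin

lemma f0S: "w \<noteq> 0 \<Longrightarrow> ((\<lambda>w. f0 (Sf x w)) has_derivative (\<lambda>h. f1 (Sf x w) * ((inner x h - Sf x w * inner w h / norm w) / norm w))) (at w)"
  by (rule real_chain[OF d0[OF Sf_bound] Sf_deriv])
lemma f1S: "w \<noteq> 0 \<Longrightarrow> ((\<lambda>w. f1 (Sf x w)) has_derivative (\<lambda>h. f2 (Sf x w) * ((inner x h - Sf x w * inner w h / norm w) / norm w))) (at w)"
  by (rule real_chain[OF d1[OF Sf_bound] Sf_deriv])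
lemma f2S: "w \<noteq> 0 \<Longrightarrow> ((\<lambda>w. f2 (Sf x w)) has_derivative (\<lambda>h. f3 (Sf x w) * ((inner x h - Sf x w * inner w h / norm w) / norm w))) (at w)"
  by (rule real_chain[OF d2[OF Sf_bound] Sf_deriv])

lemma axis_comp: "axis i (1::real) $ j = (if j = i then 1 else 0)"
  by (simp add: axis_def)

lemma lev0: 
  assumes "w \<noteq> 0"
  shows "pd (\<lambda>v. norm v * f0 (Sf x v)) i w = f0 (Sf x w) * w$i / norm w + f1 (Sf x w) * (x$i - Sf x w * w$i / norm w)"
  apply (rule trans[OF pd_eq])
   apply (rule f0S[OF assms] Sf_deriv[OF assms] has_derivative_norm[OF assms] vnth_deriv derivative_intros)+
  using assms apply (simp add: inner_axis inner_axis' sgn_div_norm field_simps)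
  done

lemma lev1: 
  assumes "w \<noteq> 0"
  shows "pd (\<lambda>v. (norm v * f0 (Sf x v))^2) j w = 2*((f0 (Sf x w)^2 - Sf x w*f0 (Sf x w)*f1 (Sf x w)) * w$j + norm w * f0 (Sf x w) * f1 (Sf x w) * x$j)"
  apply (rule trans[OF pd_eq])
   apply (rule f0S[OF assms] Sf_deriv[OF assms] has_derivative_norm[OF assms] vnth_deriv derivative_intros)+
  using assms apply (simp add: inner_axis inner_axis' sgn_div_norm field_simps power2_eq_square)
  done

lemma lev2: 
  assumes "w \<noteq> 0"
  shows "pd (\<lambda>w. 2*((f0 (Sf x w)^2 - Sf x w*f0 (Sf x w)*f1 (Sf x w)) * w$j + norm w * f0 (Sf x w) * f1 (Sf x w) * x$j)) i w
   = 2 * ((f0 (Sf x w)^2 - Sf x w*f0 (Sf x w)*f1 (Sf x w)) * (if i = j then 1 else 0)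
        + (f1 (Sf x w)^2 + f0 (Sf x w) * f2 (Sf x w)) * x$i * x$j
        + ((f0 (Sf x w) - Sf x w * f1 (Sf x w)) * f1 (Sf x w) - Sf x w * f0 (Sf x w) * f2 (Sf x w)) / norm w * (x$i * w$j + x$j * w$i)
        - Sf x w * ((f0 (Sf x w) - Sf x w * f1 (Sf x w)) * f1 (Sf x w) - Sf x w * f0 (Sf x w) * f2 (Sf x w)) / norm w^2 * w$i * w$j)"
  apply (rule trans[OF pd_eq])
   apply (rule f0S[OF assms] f1S[OF assms] Sf_deriv[OF assms] has_derivative_norm[OF assms] vnth_deriv derivative_intros)+
  using assms apply (simp add: inner_axis inner_axis' sgn_div_norm axis_comp)
  apply (simp add: field_simps power2_eq_square)
  done


schematic_goal tst: "((\<lambda>x. x $ i) has_derivative ?g'90) (at (w::real^'n))"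
  apply (rule vnth_deriv)
  done
lemma lev3: 
  assumes "w \<noteq> 0"
  shows "pd (\<lambda>w. (f0 (Sf x w)^2 - Sf x w*f0 (Sf x w)*f1 (Sf x w)) * (if i = j then 1 else 0)
        + (f1 (Sf x w)^2 + f0 (Sf x w) * f2 (Sf x w)) * x$i * x$j
        + ((f0 (Sf x w) - Sf x w * f1 (Sf x w)) * f1 (Sf x w) - Sf x w * f0 (Sf x w) * f2 (Sf x w)) / norm w * (x$i * w$j + x$j * w$i)
        - Sf x w * ((f0 (Sf x w) - Sf x w * f1 (Sf x w)) * f1 (Sf x w) - Sf x w * f0 (Sf x w) * f2 (Sf x w)) / norm w^2 * w$i * w$j) k w
   = (let u = norm w; s = Sf x w; K = (f0 s - s * f1 s) * f1 s - s * f0 s * f2 s;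
          T = 3 * f1 s * f2 s + f0 s * f3 s;
          l = (\<lambda>i. w$i / u); d = (\<lambda>i. x$i - s * w$i / u);
          P = (\<lambda>i j. (if i = j then 1 else 0) - l i * l j)
      in (K * (P j k * d i + P i k * d j + P i j * d k) + T * d i * d j * d k) / u)"
proof -
  have norm_nz: "norm w \<noteq> 0" "(norm w)^2 \<noteq> 0" using assms by simp_all
  show ?thesis
  apply (rule trans[OF pd_eq])
   apply (rule f0S[OF assms] norm_nz f1S[OF assms] f2S[OF assms] Sf_deriv[OF assms] has_derivative_norm[OF assms] vnth_deriv derivative_intros)+
  using assms apply (simp add: inner_axis inner_axis' sgn_div_norm axis_comp Let_def)
  apply (simp add: field_simps power2_eq_square)
  done
qed

end


definition gmat :: "real \<Rightarrow> real \<Rightarrow> real \<Rightarrow> real \<Rightarrow> real^'n \<Rightarrow> real^'n \<Rightarrow> real^'n^'n" where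
  "gmat A0 P1 P2 s l d = (\<chi> i j. A0*(if i=j then 1 else 0) + P2*d$i*d$j + P1*(d$i*l$j + l$i*d$j) + s*P1*l$i*l$j)"

lemma sum_if_eq: "(\<Sum>j\<in>UNIV. (if (i::'n::finite) = j then (1::real) else 0) * f j) = f i"
proof -
  have "\<And>j. (if i = j then (1::real) else 0) * f j = (if i = j then f j else 0)" by simp
  then show ?thesis by (simp add: sum.delta')
qed

lemma gmat_mult: "gmat A0 P1 P2 s l d *v z = A0 *\<^sub>R z + (P2*(d\<bullet>z) + P1*(l\<bullet>z)) *\<^sub>R d + (P1*(d\<bullet>z) + s*P1*(l\<bullet>z)) *\<^sub>R l"
proof -
  have "(gmat A0 P1 P2 s l d *v z) $ i = (A0 *\<^sub>R z + (P2*(d\<bullet>z) + P1*(l\<bullet>z)) *\<^sub>R d + (P1*(d\<bullet>z) + s*P1*(l\<bullet>z)) *\<^sub>R l) $ i" for i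
  proof -
    have "(gmat A0 P1 P2 s l d *v z) $ i = (\<Sum>j\<in>UNIV. A0 * ((if i=j then 1 else 0) * z$j) + P2*d$i*(d$j*z$j) + P1*d$i*(l$j*z$j) + P1*l$i*(d$j*z$j) + s*P1*l$i*(l$j*z$j))"
      unfolding gmat_def matrix_vector_mult_def by (simp add: algebra_simps)
    also have "\<dots> = A0 * z$i + P2*d$i*(d\<bullet>z) + P1*d$i*(l\<bullet>z) + P1*l$i*(d\<bullet>z) + s*P1*l$i*(l\<bullet>z)"
      by (simp add: sum.distrib sum_distrib_left[symmetric] inner_vec_def sum_if_eq del: sum_distrib_left)
    finally show ?thesis by (simp add: algebra_simps)
  qed
  then show ?thesis by (simp add: vec_eq_iff)
qed

lemma gmat_sym: "transpose (gmat A0 P1 P2 s l d) = gmat A0 P1 P2 s l d"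
  unfolding gmat_def transpose_def by (simp add: vec_eq_iff algebra_simps)

lemma gmat_quad: "(\<Sum>i\<in>UNIV. \<Sum>j\<in>UNIV. gmat A0 P1 P2 s l d $ i $ j * z$i * z$j) = z \<bullet> (gmat A0 P1 P2 s l d *v z)"
  by (simp add: inner_vec_def matrix_vector_mult_def sum_distrib_left algebra_simps)

lemma dsum_eq: "(\<Sum>j\<in>UNIV. \<Sum>k\<in>UNIV. (M::real^'n^'n)$j$k * a$j * b$k) = a \<bullet> (M *v b)"
  by (simp add: inner_vec_def matrix_vector_mult_def sum_distrib_left algebra_simps)

lemma inv_sym:
  fixes G Gi :: "real^'n^'n"
  assumes "transpose G = G" "Gi ** G = mat 1" "G ** Gi = mat 1"
  shows "transpose Gi = Gi"
proof -
  have "transpose Gi ** G = mat 1"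
    using arg_cong[OF assms(3), of transpose] assms(1) by (simp add: matrix_transpose_mul transpose_mat)
  hence "transpose Gi = transpose Gi ** (G ** Gi)" using assms(3) by simp
  also have "\<dots> = Gi" by (simp add: matrix_mul_assoc \<open>transpose Gi ** G = mat 1\<close>)
  finally show ?thesis .
qed

lemma core_inv:
  fixes l d :: "real^'n" and Gi :: "real^'n^'n" and p s p1 p2 :: real
  defines "G \<equiv> gmat (p*(p - s*p1)) (p*p1) (p1^2 + p*p2) s l d"
  assumes ll: "l \<bullet> l = 1" and ld: "l \<bullet> d = 0"
    and pp: "p > 0" and Bnz: "p - s*p1 + (d\<bullet>d)*p2 \<noteq> 0"
    and inv: "Gi ** G = mat 1" "G ** Gi = mat 1"
  shows "Gi *v d = (1/(p*(p - s*p1 + (d\<bullet>d)*p2))) *\<^sub>R (d - (p1*(d\<bullet>d)/p) *\<^sub>R l)"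
    and "Gi *v (p *\<^sub>R l + p1 *\<^sub>R d) = (1/p) *\<^sub>R l"
proof -
  have dl: "d \<bullet> l = 0" using ld by (simp add: inner_commute)
  define dd where "dd = d \<bullet> d"
  define B where "B = p - s*p1 + dd*p2"
  define \<beta> where "\<beta> = 1/(p*B)"
  define \<gamma> where "\<gamma> = \<beta>*p1*dd/p"
  have bB: "\<beta>*(p*B) = 1" using pp Bnz by (simp add: \<beta>_def B_def dd_def)
  have gp: "\<gamma>*p = \<beta>*p1*dd" using pp by (simp add: \<gamma>_def)
  define w0 where "w0 = \<beta> *\<^sub>R d - \<gamma> *\<^sub>R l"
  have dw: "d \<bullet> w0 = \<beta>*dd" and lw: "l \<bullet> w0 = - \<gamma>"
    by (simp_all add: w0_def inner_diff_right ll ld dl dd_def)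
  have "(G *v w0) $ i = d $ i" for i
  proof -
    have "(G *v w0) $ i = (\<beta>*(p^2 - s*p*p1 + (p1^2+p*p2)*dd) - p1*(\<gamma>*p))*d$i + (p*(\<beta>*p1*dd) - p*(\<gamma>*p))*l$i"
      unfolding G_def gmat_mult dw lw by (simp add: w0_def algebra_simps power2_eq_square)
    also have "\<dots> = (\<beta>*(p*B))*d$i" unfolding gp by (simp add: B_def algebra_simps power2_eq_square)
    finally show ?thesis by (simp add: bB)
  qed
  hence "G *v w0 = d" by (simp add: vec_eq_iff)
  hence "Gi *v d = w0" using inv(1) by (metis matrix_vector_mul_assoc matrix_vector_mul_lid)
  then show "Gi *v d = (1/(p*(p - s*p1 + (d\<bullet>d)*p2))) *\<^sub>R (d - (p1*(d\<bullet>d)/p) *\<^sub>R l)"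
    by (simp add: w0_def \<beta>_def \<gamma>_def B_def dd_def algebra_simps)
  have "G *v ((1/p) *\<^sub>R l) = p *\<^sub>R l + p1 *\<^sub>R d"
    unfolding G_def gmat_mult using pp
    apply (simp add: inner_diff_right inner_scaleR_right ll ld dl vec_eq_iff)
    apply (simp add: field_simps power2_eq_square)
    done
  then show "Gi *v (p *\<^sub>R l + p1 *\<^sub>R d) = (1/p) *\<^sub>R l"
    using inv(1) by (metis matrix_vector_mul_assoc matrix_vector_mul_lid)
qed

lemma core:
  fixes l d lv :: "real^'n" and Gi :: "real^'n^'n" and p s p1 p2 p3 u N :: real
    and C :: "'n \<Rightarrow> 'n \<Rightarrow> 'n \<Rightarrow> real" and I :: "'n \<Rightarrow> real" and h :: "'n \<Rightarrow> 'n \<Rightarrow> real"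
  defines "G \<equiv> gmat (p*(p - s*p1)) (p*p1) (p1^2 + p*p2) s l d"
  assumes ll: "l \<bullet> l = 1" and ld: "l \<bullet> d = 0"
    and pp: "p > 0" "u > 0" "p - s*p1 > 0" and Bnz: "p - s*p1 + (d\<bullet>d)*p2 > 0"
    and inv: "Gi ** G = mat 1" "G ** Gi = mat 1"
    and Cdef: "\<And>i j k. C i j k = (((p - s*p1)*p1 - s*p*p2) *
         (((if j=k then 1 else 0) - l$j*l$k)*d$i + ((if i=k then 1 else 0) - l$i*l$k)*d$j + ((if i=j then 1 else 0) - l$i*l$j)*d$k)
         + (3*p1*p2 + p*p3)*d$i*d$j*d$k)/(2*u)"
    and lv: "lv = p *\<^sub>R l + p1 *\<^sub>R d"
    and Idef: "\<And>i. I i = (\<Sum>j\<in>UNIV. \<Sum>k\<in>UNIV. Gi$j$k * C i j k)"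
    and Ndef: "N = (\<Sum>i\<in>UNIV. \<Sum>j\<in>UNIV. Gi$i$j * I i * I j)"
    and hdef: "\<And>i j. h i j = G$i$j - lv$i*lv$j"
    and Nnz: "N \<noteq> 0"
  shows "let n = real CARD('n); A = (p - s * p1) * p1 - s * p * p2;
         B = p - s * p1 + (d\<bullet>d) * p2;
         E = (d\<bullet>d) * ((p - s * p1) * p3 + 3 * s * p2^2);
         P = ((n + 1) * A * B) / ((n + 1) * A * B + E * p);
         Q = (E * p^2) / ((n + 1) * A * B * p + E * p^2)
     in C i j k = P / (n + 1) * (h i j * I k + h j k * I i + h k i * I j) + Q / N * I i * I j * I k"
proof -
  have dl: "d \<bullet> l = 0" using ld by (simp add: inner_commute)
  define dd where "dd = d \<bullet> d"
  define B where "B = p - s*p1 + dd*p2"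
  define A0 where "A0 = p*(p - s*p1)"
  define K where "K = (p - s*p1)*p1 - s*p*p2"
  define G3 where "G3 = (p - s * p1) * p3 + 3 * s * p2^2"
  define a where "a = K/(2*u*A0)"
  define b where "b = p^2*G3/(2*u*A0)"
  define \<beta> where "\<beta> = 1/(p*B)"
  define n where "n = real CARD('n)"
  have A0pos: "A0 > 0" using pp by (simp add: A0_def)
  have Bpos: "B > 0" using Bnz by (simp add: B_def dd_def)
  have GT: "transpose G = G" unfolding G_def by (rule gmat_sym)
  have Gs: "G$i$j = G$j$i" for i j using GT by (metis transpose_def vec_lambda_beta)
  have GiT: "transpose Gi = Gi" by (rule inv_sym[OF GT inv])
  have Gis: "Gi$i$j = Gi$j$i" for i j using GiT by (metis transpose_def vec_lambda_beta)
  have Gid: "Gi *v d = \<beta> *\<^sub>R (d - (p1*dd/p) *\<^sub>R l)"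
    using core_inv(1)[OF ll ld pp(1) _ inv[unfolded G_def]] Bpos by (simp add: \<beta>_def B_def dd_def G_def)
  have Gil: "Gi *v lv = (1/p) *\<^sub>R l"
    using core_inv(2)[OF ll ld pp(1) _ inv[unfolded G_def]] Bpos by (simp add: lv B_def dd_def G_def)
  have hform: "h i j = A0*((if i=j then 1 else 0) - l$i*l$j) + p*p2*d$i*d$j" for i j
    unfolding hdef G_def gmat_def lv A0_def by (simp add: algebra_simps power2_eq_square)
  have hs: "h i j = h j i" for i j unfolding hform by (simp add: algebra_simps)
  have key1: "a*A0 = K/(2*u)" using A0pos pp by (simp add: a_def)
  have key2: "3*a*p*p2 + b = (3*p1*p2 + p*p3)/(2*u)"
  proof -
    have "3*a*p*p2 + b = (3*K*p*p2 + p^2*G3)/(2*u*A0)" by (simp add: a_def b_def add_divide_distrib)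
    also have "3*K*p*p2 + p^2*G3 = (3*p1*p2 + p*p3)*A0"
      unfolding K_def G3_def A0_def by (simp add: algebra_simps power2_eq_square)
    also have "(3*p1*p2 + p*p3)*A0/(2*u*A0) = (3*p1*p2 + p*p3)/(2*u)" using A0pos by simp
    finally show ?thesis .
  qed
  have Cform: "C i j k = a*(h j k*d$i + h i k*d$j + h i j*d$k) + b*d$i*d$j*d$k" for i j k
  proof -
    define SP where "SP = ((if j=k then 1 else 0) - l$j*l$k)*d$i + ((if i=k then 1 else 0) - l$i*l$k)*d$j + ((if i=j then 1 else 0) - l$i*l$j)*d$k"
    have "a*(h j k*d$i + h i k*d$j + h i j*d$k) + b*d$i*d$j*d$k = (a*A0)*SP + (3*a*p*p2 + b)*(d$i*d$j*d$k)"
      unfolding hform SP_def by (simp add: algebra_simps)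
    also have "\<dots> = (K*SP + (3*p1*p2 + p*p3)*d$i*d$j*d$k)/(2*u)"
      unfolding key1 key2 by (simp add: add_divide_distrib algebra_simps)
    finally show ?thesis unfolding Cdef SP_def K_def by simp
  qed
  have ncard: "(\<Sum>j\<in>(UNIV::'n set). (1::real)) = n" by (simp add: n_def)
  have S1: "(\<Sum>j\<in>UNIV. \<Sum>k\<in>UNIV. Gi$j$k * h j k) = n - 1"
  proof -
    have "(\<Sum>j\<in>UNIV. \<Sum>k\<in>UNIV. Gi$j$k * G$j$k) = (\<Sum>j\<in>UNIV. (Gi ** G)$j$j)"
      by (simp add: matrix_matrix_mult_def Gs)
    also have "\<dots> = n" using inv(1) by (simp add: mat_def n_def)
    finally have 1: "(\<Sum>j\<in>UNIV. \<Sum>k\<in>UNIV. Gi$j$k * G$j$k) = n" .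
    have "(\<Sum>j\<in>UNIV. \<Sum>k\<in>UNIV. Gi$j$k * lv$j * lv$k) = lv \<bullet> (Gi *v lv)" by (rule dsum_eq)
    also have "\<dots> = 1" unfolding Gil using pp by (simp add: lv inner_add_left ll dl)
    finally have 2: "(\<Sum>j\<in>UNIV. \<Sum>k\<in>UNIV. Gi$j$k * lv$j * lv$k) = 1" .
    have "(\<Sum>j\<in>UNIV. \<Sum>k\<in>UNIV. Gi$j$k * h j k) = (\<Sum>j\<in>UNIV. \<Sum>k\<in>UNIV. Gi$j$k * G$j$k) - (\<Sum>j\<in>UNIV. \<Sum>k\<in>UNIV. Gi$j$k * lv$j * lv$k)"
      by (simp add: hdef algebra_simps sum_subtractf)
    then show ?thesis using 1 2 by simp
  qed
  have GGid: "G *v (Gi *v d) = d" using inv(2) by (metis matrix_vector_mul_assoc matrix_vector_mul_lid)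
  have lvw: "lv \<bullet> (Gi *v d) = 0"
    unfolding Gid lv using pp by (simp add: inner_add_left inner_diff_right ll ld dl dd_def algebra_simps)
  have S2: "(\<Sum>j\<in>UNIV. \<Sum>k\<in>UNIV. Gi$j$k * (h i j * d$k)) = d$i" for i
  proof -
    have "(\<Sum>j\<in>UNIV. \<Sum>k\<in>UNIV. Gi$j$k * (h i j * d$k)) = (\<Sum>j\<in>UNIV. h i j * (Gi *v d)$j)"
      by (simp add: matrix_vector_mult_def sum_distrib_left algebra_simps)
    also have "\<dots> = (G *v (Gi *v d))$i - lv$i * (lv \<bullet> (Gi *v d))"
      by (simp add: hdef matrix_vector_mult_def inner_vec_def algebra_simps sum_subtractf sum_distrib_left)
    also have "\<dots> = d$i" using GGid lvw by simp
    finally show ?thesis .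
  qed
  have S3: "(\<Sum>j\<in>UNIV. \<Sum>k\<in>UNIV. Gi$j$k * (h i k * d$j)) = d$i" for i
  proof -
    have "(\<Sum>j\<in>UNIV. \<Sum>k\<in>UNIV. Gi$j$k * (h i k * d$j)) = (\<Sum>k\<in>UNIV. \<Sum>j\<in>UNIV. Gi$k$j * (h i k * d$j))"
      by (subst sum.swap) (simp add: Gis)
    then show ?thesis using S2[of i] by simp
  qed
  have S4: "(\<Sum>j\<in>UNIV. \<Sum>k\<in>UNIV. Gi$j$k * d$j * d$k) = \<beta>*dd"
    unfolding dsum_eq Gid by (simp add: inner_diff_right ld dl dd_def)
  define c where "c = (n+1)*a + b*\<beta>*dd"
  have Ic: "I i = c * d$i" for i
  proof -
    have "I i = (\<Sum>j\<in>UNIV. \<Sum>k\<in>UNIV. a*d$i*(Gi$j$k*h j k) + a*(Gi$j$k*(h i k*d$j)) + a*(Gi$j$k*(h i j*d$k)) + b*d$i*(Gi$j$k*d$j*d$k))"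
      by (simp add: Idef Cform algebra_simps)
    also have "\<dots> = a*d$i*(n-1) + a*d$i + a*d$i + b*d$i*(\<beta>*dd)"
      by (simp add: sum.distrib sum_distrib_left[symmetric] S1 S2 S3 S4 del: sum_distrib_left)
    finally show ?thesis by (simp add: c_def algebra_simps)
  qed
  have Nc: "N = c^2 * (\<beta>*dd)"
  proof -
    have "N = c^2 * (\<Sum>j\<in>UNIV. \<Sum>k\<in>UNIV. Gi$j$k * d$j * d$k)"
      by (simp add: Ndef Ic sum_distrib_left algebra_simps power2_eq_square)
    then show ?thesis using S4 by simp
  qed
  have cnz: "c \<noteq> 0" and bdnz: "\<beta>*dd \<noteq> 0" using Nnz Nc by auto
  have ddnz: "dd \<noteq> 0" using bdnz by auto
  have A0nz: "A0 \<noteq> 0" and Bnz': "B \<noteq> 0" and pnz: "p \<noteq> 0" and unz: "u \<noteq> 0" and n1: "n + 1 \<noteq> 0"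
    using A0pos Bpos pp by (auto simp: n_def)
  define D where "D = (n+1)*K*B + dd*G3*p"
  have cD: "c = D/(2*u*A0*B)"
    unfolding c_def a_def b_def \<beta>_def D_def using A0nz Bnz' pnz unz
    by (simp add: field_simps power2_eq_square)
  have Dnz: "D \<noteq> 0" using cnz cD by auto
  have Peq: "((n + 1) * ((p - s * p1) * p1 - s * p * p2) * (p - s * p1 + (d\<bullet>d) * p2)) / ((n + 1) * ((p - s * p1) * p1 - s * p * p2) * (p - s * p1 + (d\<bullet>d) * p2) + (d\<bullet>d) * ((p - s * p1) * p3 + 3 * s * p2^2) * p) = (n+1)*K*B/D"
    by (simp add: K_def B_def dd_def G3_def D_def)
  have Qeq: "((d\<bullet>d) * ((p - s * p1) * p3 + 3 * s * p2^2) * p^2) / ((n + 1) * ((p - s * p1) * p1 - s * p * p2) * (p - s * p1 + (d\<bullet>d) * p2) * p + (d\<bullet>d) * ((p - s * p1) * p3 + 3 * s * p2^2) * p^2) = dd*G3*p/D"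
  proof -
    have "(n + 1) * ((p - s * p1) * p1 - s * p * p2) * (p - s * p1 + (d\<bullet>d) * p2) * p + (d\<bullet>d) * ((p - s * p1) * p3 + 3 * s * p2^2) * p^2 = D * p"
      by (simp add: K_def B_def dd_def G3_def D_def algebra_simps power2_eq_square)
    then show ?thesis using pnz by (simp add: dd_def G3_def power2_eq_square)
  qed
  have e1: "((n+1)*K*B/D)/(n+1)*c = a"
  proof -
    have "((n+1)*K*B/D)/(n+1) = K*B/D" using n1 by simp
    moreover have "K*B/D * (D/(2*u*A0*B)) = K/(2*u*A0)" using Dnz Bnz' by simp
    ultimately show ?thesis unfolding cD a_def by simp
  qed
  have e2: "(dd*G3*p/D)/N*(c*c*c) = b"
    unfolding Nc using cnz bdnz
    apply (simp add: power2_eq_square)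
    unfolding cD b_def \<beta>_def using A0nz Bnz' pnz unz n1 Dnz ddnz by (simp add: field_simps power2_eq_square)
  have gen: "PP * (h i j * I k + h j k * I i + h k i * I j) + QQ * I i * I j * I k
      = (PP*c) * (h j k*d$i + h i k*d$j + h i j*d$k) + (QQ*(c*c*c)) * (d$i*d$j*d$k)" for PP QQ
    by (simp add: Ic hs[of k i] algebra_simps)
  have main: "C i j k = ((n+1)*K*B/D)/(n+1) * (h i j * I k + h j k * I i + h k i * I j) + (dd*G3*p/D)/N * I i * I j * I k"
    unfolding gen e1 e2 Cform by (simp add: algebra_simps)
  show ?thesis unfolding Let_def n_def[symmetric] Peq Qeq by (rule main)
qed


lemma sq_lt: "\<bar>t\<bar> < (r::real) \<Longrightarrow> r^2 - t^2 > 0"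
proof -
  assume a: "\<bar>t\<bar> < r"
  have "\<bar>t\<bar>^2 < r^2" by (rule power_strict_mono[OF a abs_ge_zero]) simp
  then show ?thesis by simp
qed

lemma psi_pos:
  fixes f0 f1 f2 :: "real \<Rightarrow> real" and r s0 :: real
  assumes d0: "\<And>t. \<bar>t\<bar> \<le> r \<Longrightarrow> (f0 has_real_derivative f1 t) (at t)"
    and d1: "\<And>t. \<bar>t\<bar> \<le> r \<Longrightarrow> (f1 has_real_derivative f2 t) (at t)"
    and pos: "\<And>t. \<bar>t\<bar> < r \<Longrightarrow> f0 t > 0 \<and> f0 t - t * f1 t + (r^2 - t^2) * f2 t > 0"
    and s0: "\<bar>s0\<bar> < r"
  shows "f0 s0 - s0 * f1 s0 > 0"
proof -
  define q where "q t = (f0 t - t * f1 t) * sqrt (r^2 - t^2)" for t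
  have qd: "(q has_real_derivative (- t * (f0 t - t * f1 t + (r^2 - t^2) * f2 t) / sqrt (r^2 - t^2))) (at t)"
    if "\<bar>t\<bar> < r" for t
  proof -
    have tr: "r^2 - t^2 > 0" using sq_lt[OF that] .
    define S where "S = sqrt (r^2 - t^2)"
    have Sp: "S > 0" using tr by (simp add: S_def)
    have SS: "r^2 - t^2 = S * S" using tr by (simp add: S_def)
    have tle: "\<bar>t\<bar> \<le> r" using that by simp
    have g: "((\<lambda>t. r^2 - t^2) has_real_derivative (0 - 2*t)) (at t)"
      by (auto intro!: derivative_eq_intros)
    have sq: "((\<lambda>t. sqrt (r^2 - t^2)) has_real_derivative (inverse (sqrt (r^2 - t^2)) / 2) * (0 - 2*t)) (at t)"
      using DERIV_chain2[OF DERIV_real_sqrt[OF tr] g] .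
    have ps: "((\<lambda>t. f0 t - t * f1 t) has_real_derivative f1 t - (1 * f1 t + t * f2 t)) (at t)"
      using DERIV_diff[OF d0[OF tle] DERIV_mult[OF DERIV_ident d1[OF tle]]] by (simp add: algebra_simps)
    have "((\<lambda>t. (f0 t - t * f1 t) * sqrt (r^2 - t^2)) has_real_derivative
        (f1 t - (1 * f1 t + t * f2 t)) * sqrt (r^2 - t^2) + (f0 t - t * f1 t) * ((inverse (sqrt (r^2 - t^2)) / 2) * (0 - 2*t))) (at t)"
      using DERIV_mult[OF ps sq] by (simp add: algebra_simps)
    moreover have "(f1 t - (1 * f1 t + t * f2 t)) * sqrt (r^2 - t^2) + (f0 t - t * f1 t) * ((inverse (sqrt (r^2 - t^2)) / 2) * (0 - 2*t))
        = - t * (f0 t - t * f1 t + (r^2 - t^2) * f2 t) / sqrt (r^2 - t^2)"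
      unfolding S_def[symmetric] SS using Sp by (simp add: field_simps)
    ultimately show ?thesis unfolding q_def by simp
  qed
  have qcont: "continuous_on {-r..r} q"
  proof -
    have "continuous_on {-r..r} f0" "continuous_on {-r..r} f1"
      by (auto intro!: continuous_at_imp_continuous_on DERIV_isCont[OF d0] DERIV_isCont[OF d1])
    then show ?thesis unfolding q_def by (intro continuous_intros) auto
  qed
  have qr: "q r = 0" "q (-r) = 0" by (simp_all add: q_def)
  have lsign: "l * z < 0" if "\<bar>z\<bar> < r" "z \<noteq> 0" "DERIV q z :> l" for l z
  proof -
    define Bz where "Bz = f0 z - z * f1 z + (r^2 - z^2) * f2 z"
    define Sq where "Sq = sqrt (r^2 - z^2)"
    have "l = - z * Bz / Sq"
      unfolding Bz_def Sq_def using qd[OF that(1)] that(3) DERIV_unique by blast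
    hence "l * z = - ((z * z) * Bz / Sq)" by simp
    moreover have "Sq > 0" using sq_lt[OF that(1)] by (simp add: Sq_def)
    moreover have "z * z > 0" using that(2) by (auto simp: zero_less_mult_iff linorder_neq_iff)
    moreover have "Bz > 0" using pos[OF that(1)] by (simp add: Bz_def)
    ultimately show ?thesis by simp
  qed
  have "q s0 > 0"
  proof (cases "s0 > 0")
    case True
    have "\<exists>l z. s0 < z \<and> z < r \<and> DERIV q z :> l \<and> q r - q s0 = (r - s0) * l"
    proof (rule MVT)
      show "s0 < r" using s0 by simp
      show "continuous_on {s0..r} q" by (rule continuous_on_subset[OF qcont]) (use s0 in auto)
      fix x assume "s0 < x" "x < r"
      hence "\<bar>x\<bar> < r" using s0 by auto
      then show "q differentiable at x" using qd[of x] unfolding has_field_derivative_def by (blast intro: differentiableI)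
    qed
    then obtain l z where z: "s0 < z" "z < r" "DERIV q z :> l" "q r - q s0 = (r - s0) * l" by blast
    have "\<bar>z\<bar> < r" using z True by auto
    from lsign[OF this _ z(3)] z True have "l < 0"
      by (metis less_trans mult_less_0_iff not_less_iff_gr_or_eq)
    moreover have "q s0 = l * (s0 - r)" using z(4) qr by (simp add: algebra_simps)
    ultimately show ?thesis using z by (simp add: mult_neg_neg)
  next
    case False
    show ?thesis
    proof (cases "s0 = 0")
      case True
      then show ?thesis using pos[of 0] s0 by (simp add: q_def)
    next
      case False
      hence neg: "s0 < 0" using \<open>\<not> s0 > 0\<close> by simp
      have "\<exists>l z. -r < z \<and> z < s0 \<and> DERIV q z :> l \<and> q s0 - q (-r) = (s0 - -r) * l"
      proof (rule MVT)
        show "-r < s0" using s0 by simp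
        show "continuous_on {-r..s0} q" by (rule continuous_on_subset[OF qcont]) (use s0 in auto)
        fix x assume "-r < x" "x < s0"
        hence "\<bar>x\<bar> < r" using s0 neg by auto
        then show "q differentiable at x" using qd[of x] unfolding has_field_derivative_def by (blast intro: differentiableI)
      qed
      then obtain l z where z: "-r < z" "z < s0" "DERIV q z :> l" "q s0 - q (-r) = (s0 - -r) * l" by blast
      have "\<bar>z\<bar> < r" using z neg by auto
      from lsign[OF this _ z(3)] z neg have "l > 0"
        by (metis mult_less_0_iff not_less_iff_gr_or_eq less_trans)
      moreover have "q s0 = l * (s0 + r)" using z(4) qr by (simp add: algebra_simps)
      ultimately show ?thesis using z by simp
    qed
  qed
  moreover have "sqrt (r^2 - s0^2) > 0" using sq_lt[OF s0] by simp
  ultimately show ?thesis unfolding q_def by (simp add: zero_less_mult_iff)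
qed


definition gform :: "(real \<Rightarrow> real) \<Rightarrow> (real \<Rightarrow> real) \<Rightarrow> (real \<Rightarrow> real) \<Rightarrow> real^'n \<Rightarrow> real^'n \<Rightarrow> 'n \<Rightarrow> 'n \<Rightarrow> real" where
  "gform f0 f1 f2 x w i j = (f0 (Sf x w)^2 - Sf x w*f0 (Sf x w)*f1 (Sf x w)) * (if i = j then 1 else 0)
        + (f1 (Sf x w)^2 + f0 (Sf x w) * f2 (Sf x w)) * x$i * x$j
        + ((f0 (Sf x w) - Sf x w * f1 (Sf x w)) * f1 (Sf x w) - Sf x w * f0 (Sf x w) * f2 (Sf x w)) / norm w * (x$i * w$j + x$j * w$i)
        - Sf x w * ((f0 (Sf x w) - Sf x w * f1 (Sf x w)) * f1 (Sf x w) - Sf x w * f0 (Sf x w) * f2 (Sf x w)) / norm w^2 * w$i * w$j"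

definition lvec :: "real^'n \<Rightarrow> real^'n" where "lvec w = (1/norm w) *\<^sub>R w"
definition dvec :: "real^'n \<Rightarrow> real^'n \<Rightarrow> real^'n" where "dvec x w = x - Sf x w *\<^sub>R lvec w"

lemma lvec_comp: "lvec w $ i = w$i / norm w" by (simp add: lvec_def)
lemma dvec_comp: "dvec x w $ i = x$i - Sf x w * w$i / norm w" by (simp add: dvec_def lvec_def)

lemma ld_facts:
  assumes "w \<noteq> 0"
  shows "lvec w \<bullet> lvec w = 1" "lvec w \<bullet> dvec x w = 0" "dvec x w \<bullet> dvec x w = (norm x)^2 - (Sf x w)^2"
    "lvec w \<bullet> x = Sf x w"
proof -
  show ll: "lvec w \<bullet> lvec w = 1" using assms
    by (simp add: lvec_def power2_norm_eq_inner[symmetric] power2_eq_square)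
  show lx: "lvec w \<bullet> x = Sf x w" by (simp add: lvec_def Sf_def inner_commute)
  show "lvec w \<bullet> dvec x w = 0" by (simp add: dvec_def inner_diff_right lx ll)
  have xl: "x \<bullet> lvec w = Sf x w" using lx by (simp add: inner_commute)
  have xx: "x \<bullet> x = (norm x)^2" by (simp add: power2_norm_eq_inner)
  show "dvec x w \<bullet> dvec x w = (norm x)^2 - (Sf x w)^2"
    by (simp add: dvec_def inner_diff_right inner_diff_left lx xl ll xx power2_eq_square)
qed

lemma gform_gmat:
  assumes "w \<noteq> 0"
  shows "gform f0 f1 f2 x w i j = gmat (f0 (Sf x w) * (f0 (Sf x w) - Sf x w * f1 (Sf x w))) (f0 (Sf x w) * f1 (Sf x w))
     (f1 (Sf x w)^2 + f0 (Sf x w) * f2 (Sf x w)) (Sf x w) (lvec w) (dvec x w) $ i $ j"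
proof -
  define s where "s = Sf x w"
  define u where "u = norm w"
  have u: "u \<noteq> 0" using assms by (simp add: u_def)
  show ?thesis
    unfolding gform_def gmat_def lvec_comp dvec_comp s_def[symmetric] u_def[symmetric]
    using u by (simp add: field_simps power2_eq_square)
qed

lemma gmat_B:
  fixes l d :: "real^'n"
  assumes ll: "l \<bullet> l = 1" and ld: "l \<bullet> d = 0" and dnz: "d \<noteq> 0" and pp: "p > 0"
    and pdef: "\<And>z. z \<noteq> 0 \<Longrightarrow> z \<bullet> (gmat (p*(p - s*p1)) (p*p1) (p1^2 + p*p2) s l d *v z) > 0"
  shows "p - s*p1 + (d\<bullet>d)*p2 > 0"
proof -
  have dl: "d \<bullet> l = 0" using ld by (simp add: inner_commute)
  define dd where "dd = d \<bullet> d"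
  have ddp: "dd > 0" using dnz by (simp add: dd_def)
  define \<gamma> where "\<gamma> = p1*dd/p"
  have gp: "\<gamma>*p = p1*dd" using pp by (simp add: \<gamma>_def)
  define z where "z = d - \<gamma> *\<^sub>R l"
  have zd: "z \<bullet> d = dd" "d \<bullet> z = dd" by (simp_all add: z_def inner_diff_left inner_diff_right dl ld dd_def)
  have zl: "z \<bullet> l = - \<gamma>" "l \<bullet> z = - \<gamma>" by (simp_all add: z_def inner_diff_left inner_diff_right dl ld ll)
  have zz: "z \<bullet> z = dd + \<gamma>^2"
    by (simp add: z_def inner_diff_left inner_diff_right dl ld ll dd_def power2_eq_square)
  have znz: "z \<noteq> 0" using zd ddp by auto
  have "z \<bullet> (gmat (p*(p - s*p1)) (p*p1) (p1^2 + p*p2) s l d *v z)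
      = p*(p - s*p1)*dd + (\<gamma>*p)^2 + (p1^2 + p*p2)*dd^2 - 2*p1*(\<gamma>*p)*dd"
    unfolding gmat_mult by (simp add: inner_add_right zd zl zz algebra_simps power2_eq_square)
  also have "\<dots> = p*dd*(p - s*p1 + dd*p2)" unfolding gp by (simp add: algebra_simps power2_eq_square)
  finally have "p*dd*(p - s*p1 + dd*p2) > 0" using pdef[OF znz] by simp
  moreover have "p*dd > 0" using pp ddp by simp
  ultimately have "p - s*p1 + dd*p2 > 0" using zero_less_mult_pos by blast
  then show ?thesis by (simp add: dd_def)
qed

lemma exists_dir:
  fixes x y :: "real^'n"
  assumes y: "y \<noteq> 0" and dnz: "dvec x y \<noteq> 0" and t: "\<bar>t\<bar> < norm x"
  shows "\<exists>w. w \<noteq> 0 \<and> Sf x w = t"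
proof -
  define l where "l = lvec y"
  define d where "d = dvec x y"
  define s where "s = Sf x y"
  define r where "r = norm x"
  define dd where "dd = d \<bullet> d"
  have ll: "l \<bullet> l = 1" and ld: "l \<bullet> d = 0" and dd: "dd = r^2 - s^2"
    using ld_facts(1)[OF y] ld_facts(2)[where x=x, OF y] ld_facts(3)[where x=x, OF y] by (simp_all add: l_def d_def s_def r_def dd_def)
  have dl: "d \<bullet> l = 0" using ld by (simp add: inner_commute)
  have ddp: "dd > 0" using dnz by (simp add: dd_def d_def)
  have rp: "r > 0" unfolding r_def using t abs_ge_zero[of t] by linarith
  have xdl: "x = d + s *\<^sub>R l" by (simp add: d_def dvec_def l_def s_def)
  define e where "e = dd *\<^sub>R l - s *\<^sub>R d"
  have xe: "x \<bullet> e = 0" unfolding xdl e_def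
    by (simp add: inner_add_left inner_diff_right ll ld dl dd_def[symmetric] algebra_simps)
  have ee: "e \<bullet> e = dd * r^2" unfolding e_def
    by (simp add: inner_diff_left inner_diff_right ll ld dl dd_def[symmetric] dd algebra_simps power2_eq_square)
  define q where "q = sqrt ((r^2 - t^2)/dd)"
  have tr: "r^2 - t^2 > 0" using sq_lt[OF t] by (simp add: r_def)
  have qq: "q^2 * dd = r^2 - t^2" using tr ddp by (simp add: q_def)
  define w where "w = t *\<^sub>R x + q *\<^sub>R e"
  have xx: "x \<bullet> x = r^2" by (simp add: r_def power2_norm_eq_inner)
  have ww: "w \<bullet> w = (r^2)^2"
  proof -
    have "w \<bullet> w = t^2 * (x \<bullet> x) + q^2 * (e \<bullet> e) + 2*t*q*(x \<bullet> e)"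
      by (simp add: w_def inner_add_left inner_add_right inner_commute algebra_simps power2_eq_square)
    also have "\<dots> = t^2 * r^2 + (q^2 * dd) * r^2" by (simp add: xx ee xe)
    also have "\<dots> = t^2 * r^2 + (r^2 - t^2) * r^2" by (simp only: qq)
    also have "\<dots> = (r^2)^2" by (simp add: algebra_simps power2_eq_square)
    finally show ?thesis .
  qed
  have nw: "norm w = r^2" unfolding norm_eq_sqrt_inner ww by (simp only: real_sqrt_abs abs_power2)
  have xw: "x \<bullet> w = t * r^2" by (simp add: w_def inner_add_right xx xe)
  have "w \<noteq> 0" using nw rp by auto
  moreover have "Sf x w = t" using rp by (simp add: Sf_def nw xw)
  ultimately show ?thesis by blast
qed

context
  fixes x :: "real^'n" and f0 f1 f2 f3 :: "real \<Rightarrow> real"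
  assumes d0: "\<And>t. \<bar>t\<bar> \<le> norm x \<Longrightarrow> (f0 has_real_derivative f1 t) (at t)"
    and d1: "\<And>t. \<bar>t\<bar> \<le> norm x \<Longrightarrow> (f1 has_real_derivative f2 t) (at t)"
    and d2: "\<And>t. \<bar>t\<bar> \<le> norm x \<Longrightarrow> (f2 has_real_derivative f3 t) (at t)"
begin

lemma fund_g_eq:
  fixes F :: "real^'n \<Rightarrow> real^'n \<Rightarrow> real"
  assumes Fx: "\<And>v. F x v = norm v * f0 (Sf x v)" and w: "w \<noteq> 0"
  shows "fund_g F x w i j = gform f0 f1 f2 x w i j"
proof -
  have o: "open (-{0::real^'n})" by auto
  have "pd (\<lambda>w'. pd (\<lambda>v. (F x v)^2) j w') i w = pd (\<lambda>w'. 2*((f0 (Sf x w')^2 - Sf x w'*f0 (Sf x w')*f1 (Sf x w')) * w'$j + norm w' * f0 (Sf x w') * f1 (Sf x w') * x$j)) i w"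
  proof (rule pd_cong[OF o])
    show "w \<in> -{0}" using w by simp
    fix w' :: "real^'n" assume "w' \<in> -{0}"
    then have "w' \<noteq> 0" by simp
    with d0 d1 d2 show "pd (\<lambda>v. (F x v)^2) j w' = 2*((f0 (Sf x w')^2 - Sf x w'*f0 (Sf x w')*f1 (Sf x w')) * w'$j + norm w' * f0 (Sf x w') * f1 (Sf x w') * x$j)"
      unfolding Fx by (rule lev1)
  qed
  also have "\<dots> = 2 * gform f0 f1 f2 x w i j" unfolding gform_def using d0 d1 d2 w by (rule lev2)
  finally show ?thesis unfolding fund_g_def by simp
qed

lemma cartan_eq:
  fixes F :: "real^'n \<Rightarrow> real^'n \<Rightarrow> real"
  assumes Fx: "\<And>v. F x v = norm v * f0 (Sf x v)" and y: "y \<noteq> 0"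
  shows "cartan F x y i j k = (let s = Sf x y; p = f0 s; p1 = f1 s; p2 = f2 s; p3 = f3 s; l = lvec y; d = dvec x y
    in (((p - s*p1)*p1 - s*p*p2) *
         (((if j=k then 1 else 0) - l$j*l$k)*d$i + ((if i=k then 1 else 0) - l$i*l$k)*d$j + ((if i=j then 1 else 0) - l$i*l$j)*d$k)
         + (3*p1*p2 + p*p3)*d$i*d$j*d$k)/(2*norm y))"
proof -
  have o: "open (-{0::real^'n})" by auto
  have "pd (\<lambda>w. fund_g F x w i j) k y = pd (\<lambda>w. gform f0 f1 f2 x w i j) k y"
    by (rule pd_cong[OF o]) (use y fund_g_eq[where F=F, OF Fx] in auto)
  also have "\<dots> = (let u = norm y; s = Sf x y; K = (f0 s - s * f1 s) * f1 s - s * f0 s * f2 s;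
          T = 3 * f1 s * f2 s + f0 s * f3 s;
          l = (\<lambda>i. y$i / u); d = (\<lambda>i. x$i - s * y$i / u);
          P = (\<lambda>i j. (if i = j then 1 else 0) - l i * l j)
      in (K * (P j k * d i + P i k * d j + P i j * d k) + T * d i * d j * d k) / u)"
    unfolding gform_def using d0 d1 d2 y by (rule lev3)
  finally show ?thesis unfolding cartan_def by (simp add: Let_def lvec_comp dvec_comp)
qed

lemma lv_eq:
  fixes F :: "real^'n \<Rightarrow> real^'n \<Rightarrow> real"
  assumes Fx: "\<And>v. F x v = norm v * f0 (Sf x v)" and y: "y \<noteq> 0"
  shows "pd (F x) i y = (f0 (Sf x y) *\<^sub>R lvec y + f1 (Sf x y) *\<^sub>R dvec x y) $ i"
proof -
  have "F x = (\<lambda>v. norm v * f0 (Sf x v))" using Fx by auto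
  moreover have "pd (\<lambda>v. norm v * f0 (Sf x v)) i y = f0 (Sf x y) * y$i / norm y + f1 (Sf x y) * (x$i - Sf x y * y$i / norm y)"
    using d0 d1 d2 y by (rule lev0)
  ultimately have "pd (F x) i y = f0 (Sf x y) * y$i / norm y + f1 (Sf x y) * (x$i - Sf x y * y$i / norm y)" by simp
  then show ?thesis by (simp add: lvec_comp dvec_comp)
qed

end


theorem corollary2:
  fixes U :: "(real^'n) set"
    and phi :: "real \<Rightarrow> real \<Rightarrow> real"
    and D :: "(real \<times> real) set"
  assumes domain: "open U" "connected U" "U \<noteq> {}"
    and smooth: "smooth_on D (\<lambda>(r, s). phi r s)"
    and dom_phi: "\<forall>x\<in>U. \<forall>s. \<bar>s\<bar> \<le> norm x \<longrightarrow> (norm x, s) \<in> D"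
    and finsler: "finsler_metric U (sph_sym phi)"
  shows "\<forall>x\<in>U. \<forall>y. y \<noteq> 0 \<longrightarrow> mean_cartan_norm2 (sph_sym phi) x y \<noteq> 0 \<longrightarrow>
    (let F = sph_sym phi; n = real CARD('n); r = norm x; s = inner x y / norm y;
         p = phi r s; p1 = dS phi r s; p2 = dS (dS phi) r s; p3 = dS (dS (dS phi)) r s;
         A = (p - s * p1) * p1 - s * p * p2;
         B = p - s * p1 + (r^2 - s^2) * p2;
         E = (r^2 - s^2) * ((p - s * p1) * p3 + 3 * s * p2^2);
         P = ((n + 1) * A * B) / ((n + 1) * A * B + E * p);
         Q = (E * p^2) / ((n + 1) * A * B * p + E * p^2);
         I = mean_cartan F x y; h = angular F x y
     in \<forall>i j k. cartan F x y i j k =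
          P / (n + 1) * (h i j * I k + h j k * I i + h k i * I j)
          + Q / mean_cartan_norm2 F x y * I i * I j * I k)"
proof (intro ballI allI impI)
  fix x y :: "real^'n"
  assume xU: "x \<in> U" and y: "y \<noteq> 0" and Nnz: "mean_cartan_norm2 (sph_sym phi) x y \<noteq> 0"
  define f0 where "f0 = phi (norm x)"
  define f1 where "f1 = dS phi (norm x)"
  define f2 where "f2 = dS (dS phi) (norm x)"
  define f3 where "f3 = dS (dS (dS phi)) (norm x)"
  have Dr: "(norm x, t) \<in> D" if "\<bar>t\<bar> \<le> norm x" for t using dom_phi xU that by auto
  have d0: "\<And>t. \<bar>t\<bar> \<le> norm x \<Longrightarrow> (f0 has_real_derivative f1 t) (at t)"
    unfolding f0_def f1_def using smooth_phi_derivs(1)[OF smooth Dr] .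
  have d1: "\<And>t. \<bar>t\<bar> \<le> norm x \<Longrightarrow> (f1 has_real_derivative f2 t) (at t)"
    unfolding f1_def f2_def using smooth_phi_derivs(2)[OF smooth Dr] .
  have d2: "\<And>t. \<bar>t\<bar> \<le> norm x \<Longrightarrow> (f2 has_real_derivative f3 t) (at t)"
    unfolding f2_def f3_def using smooth_phi_derivs(3)[OF smooth Dr] .
  have Fx: "\<And>v. sph_sym phi x v = norm v * f0 (Sf x v)" by (simp add: sph_sym_def Sf_def f0_def)
  have Fpos: "\<And>v. v \<noteq> 0 \<Longrightarrow> sph_sym phi x v > 0" using finsler xU unfolding finsler_metric_def by blast
  have Fpd: "\<And>w z. w \<noteq> 0 \<Longrightarrow> z \<noteq> 0 \<Longrightarrow> (\<Sum>i\<in>UNIV. \<Sum>j\<in>UNIV. fund_g (sph_sym phi) x w i j * z $ i * z $ j) > 0"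
    using finsler xU unfolding finsler_metric_def by blast
  have fgw: "fund_g (sph_sym phi) x w i j = gmat (f0 (Sf x w) * (f0 (Sf x w) - Sf x w * f1 (Sf x w))) (f0 (Sf x w) * f1 (Sf x w))
     (f1 (Sf x w)^2 + f0 (Sf x w) * f2 (Sf x w)) (Sf x w) (lvec w) (dvec x w) $ i $ j" if w: "w \<noteq> 0" for w i j
  proof -
    have "fund_g (sph_sym phi) x w i j = gform f0 f1 f2 x w i j" using d0 d1 d2 Fx w by (rule fund_g_eq)
    then show ?thesis using gform_gmat[OF w] by simp
  qed
  have pdw: "z \<bullet> (gmat (f0 (Sf x w) * (f0 (Sf x w) - Sf x w * f1 (Sf x w))) (f0 (Sf x w) * f1 (Sf x w))
     (f1 (Sf x w)^2 + f0 (Sf x w) * f2 (Sf x w)) (Sf x w) (lvec w) (dvec x w) *v z) > 0" if w: "w \<noteq> 0" and z: "z \<noteq> 0" for w z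
    using Fpd[OF w z] unfolding fgw[OF w] gmat_quad .
  have f0pos: "f0 (Sf x w) > 0" if w: "w \<noteq> 0" for w
  proof -
    have "norm w * f0 (Sf x w) > 0" using Fpos[OF w] Fx by simp
    then show ?thesis using w by (simp add: zero_less_mult_iff)
  qed
  have Bw: "f0 (Sf x w) - Sf x w * f1 (Sf x w) + ((norm x)^2 - (Sf x w)^2) * f2 (Sf x w) > 0"
    if w: "w \<noteq> 0" and sw: "\<bar>Sf x w\<bar> < norm x" for w
  proof -
    have "dvec x w \<bullet> dvec x w > 0" using ld_facts(3)[OF w] sq_lt[OF sw] by simp
    hence dnz: "dvec x w \<noteq> 0" by auto
    have "f0 (Sf x w) - Sf x w * f1 (Sf x w) + (dvec x w \<bullet> dvec x w) * f2 (Sf x w) > 0"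
      by (rule gmat_B[OF ld_facts(1)[OF w] ld_facts(2)[OF w] dnz f0pos[OF w] pdw[OF w]])
    then show ?thesis using ld_facts(3)[OF w] by simp
  qed
  define s where "s = Sf x y"
  define p where "p = f0 s"
  define p1 where "p1 = f1 s"
  define p2 where "p2 = f2 s"
  define p3 where "p3 = f3 s"
  define l where "l = lvec y"
  define d where "d = dvec x y"
  define u where "u = norm y"
  define G where "G = gmat (p*(p - s*p1)) (p*p1) (p1^2 + p*p2) s l d"
  have ll: "l \<bullet> l = 1" and ld: "l \<bullet> d = 0" and ddr: "d \<bullet> d = (norm x)^2 - s^2"
    using ld_facts[OF y] by (simp_all add: l_def d_def s_def)
  have fg: "fund_g (sph_sym phi) x y i j = G $ i $ j" for i j
    using fgw[OF y] by (simp add: G_def p_def p1_def p2_def s_def l_def d_def)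
  have Cd: "cartan (sph_sym phi) x y i j k = (((p - s*p1)*p1 - s*p*p2) *
         (((if j=k then 1 else 0) - l$j*l$k)*d$i + ((if i=k then 1 else 0) - l$i*l$k)*d$j + ((if i=j then 1 else 0) - l$i*l$j)*d$k)
         + (3*p1*p2 + p*p3)*d$i*d$j*d$k)/(2*u)" for i j k
  proof -
    have "cartan (sph_sym phi) x y i j k = (let s = Sf x y; p = f0 s; p1 = f1 s; p2 = f2 s; p3 = f3 s; l = lvec y; d = dvec x y
    in (((p - s*p1)*p1 - s*p*p2) *
         (((if j=k then 1 else 0) - l$j*l$k)*d$i + ((if i=k then 1 else 0) - l$i*l$k)*d$j + ((if i=j then 1 else 0) - l$i*l$j)*d$k)
         + (3*p1*p2 + p*p3)*d$i*d$j*d$k)/(2*norm y))"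
      using d0 d1 d2 Fx y by (rule cartan_eq)
    then show ?thesis by (simp add: Let_def s_def p_def p1_def p2_def p3_def l_def d_def u_def)
  qed
  have lv: "pd (sph_sym phi x) i y = (p *\<^sub>R l + p1 *\<^sub>R d) $ i" for i
  proof -
    have "pd (sph_sym phi x) i y = (f0 (Sf x y) *\<^sub>R lvec y + f1 (Sf x y) *\<^sub>R dvec x y) $ i"
      using d0 d1 d2 Fx y by (rule lv_eq)
    then show ?thesis by (simp add: s_def p_def p1_def l_def d_def)
  qed
  have dnz: "d \<noteq> 0"
  proof
    assume "d = 0"
    hence "cartan (sph_sym phi) x y i j k = 0" for i j k by (simp add: Cd)
    hence "mean_cartan (sph_sym phi) x y i = 0" for i by (simp add: mean_cartan_def)
    hence "mean_cartan_norm2 (sph_sym phi) x y = 0" by (simp add: mean_cartan_norm2_def)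
    with Nnz show False by simp
  qed
  have sx: "\<bar>s\<bar> < norm x"
  proof -
    have "(norm x)^2 - s^2 > 0" using dnz ddr by (metis inner_gt_zero_iff)
    hence "\<bar>s\<bar>^2 < (norm x)^2" by simp
    then show ?thesis by (rule power2_less_imp_less) simp
  qed
  have pp: "p > 0" using f0pos[OF y] by (simp add: p_def s_def)
  have up: "u > 0" using y by (simp add: u_def)
  have Bp: "p - s*p1 + (d \<bullet> d)*p2 > 0" using Bw[OF y] sx by (simp add: p_def p1_def p2_def s_def ddr)
  have psi: "p - s*p1 > 0"
    unfolding p_def p1_def
  proof (rule psi_pos[OF d0 d1 _ sx])
    fix t assume t: "\<bar>t\<bar> < norm x"
    obtain w where w: "w \<noteq> 0" "Sf x w = t" using exists_dir[OF y _ t] dnz by (auto simp: d_def)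
    show "f0 t > 0 \<and> f0 t - t * f1 t + ((norm x)^2 - t^2) * f2 t > 0"
      using f0pos[OF w(1)] Bw[OF w(1)] t w(2) by simp
  qed
  have pdG: "z \<bullet> (G *v z) > 0" if "z \<noteq> 0" for z
    using pdw[OF y that] by (simp add: G_def p_def p1_def p2_def s_def l_def d_def)
  have inj: "G *v z = 0 \<Longrightarrow> z = 0" for z using pdG[of z] by force
  obtain B' where B': "B' ** G = mat 1" using matrix_left_invertible_ker inj by blast
  hence "G ** B' = mat 1" using matrix_left_right_inverse by blast
  hence ex: "\<exists>A'. G ** A' = mat 1 \<and> A' ** G = mat 1" using B' by blast
  define Gi where "Gi = matrix_inv G"
  have Gi: "G ** Gi = mat 1 \<and> Gi ** G = mat 1" unfolding Gi_def matrix_inv_def by (rule someI_ex[OF ex])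
  have fgm: "fund_g_mat (sph_sym phi) x y = G" by (simp add: fund_g_mat_def vec_eq_iff fg)
  have fgi: "fund_g_inv (sph_sym phi) x y j k = Gi $ j $ k" for j k by (simp add: fund_g_inv_def fgm Gi_def)
  have main: "let n = real CARD('n); A = (p - s * p1) * p1 - s * p * p2;
         B = p - s * p1 + (d\<bullet>d) * p2;
         E = (d\<bullet>d) * ((p - s * p1) * p3 + 3 * s * p2^2);
         P = ((n + 1) * A * B) / ((n + 1) * A * B + E * p);
         Q = (E * p^2) / ((n + 1) * A * B * p + E * p^2)
     in cartan (sph_sym phi) x y i j k = P / (n + 1) * (angular (sph_sym phi) x y i j * mean_cartan (sph_sym phi) x y k
        + angular (sph_sym phi) x y j k * mean_cartan (sph_sym phi) x y i + angular (sph_sym phi) x y k i * mean_cartan (sph_sym phi) x y j)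
        + Q / mean_cartan_norm2 (sph_sym phi) x y * mean_cartan (sph_sym phi) x y i * mean_cartan (sph_sym phi) x y j * mean_cartan (sph_sym phi) x y k" for i j k
  proof (rule core[where lv = "p *\<^sub>R l + p1 *\<^sub>R d" and Gi = Gi and u = u])
    show "l \<bullet> l = 1" "l \<bullet> d = 0" "p > 0" "u > 0" "p - s*p1 > 0" "p - s*p1 + (d \<bullet> d)*p2 > 0"
      using ll ld pp up psi Bp by auto
    show "Gi ** gmat (p*(p - s*p1)) (p*p1) (p1^2 + p*p2) s l d = mat 1"
      "gmat (p*(p - s*p1)) (p*p1) (p1^2 + p*p2) s l d ** Gi = mat 1" using Gi by (auto simp: G_def)
    show "\<And>i j k. cartan (sph_sym phi) x y i j k = (((p - s*p1)*p1 - s*p*p2) *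
         (((if j=k then 1 else 0) - l$j*l$k)*d$i + ((if i=k then 1 else 0) - l$i*l$k)*d$j + ((if i=j then 1 else 0) - l$i*l$j)*d$k)
         + (3*p1*p2 + p*p3)*d$i*d$j*d$k)/(2*u)" by (rule Cd)
    show "p *\<^sub>R l + p1 *\<^sub>R d = p *\<^sub>R l + p1 *\<^sub>R d" ..
    show "\<And>i. mean_cartan (sph_sym phi) x y i = (\<Sum>j\<in>UNIV. \<Sum>k\<in>UNIV. Gi$j$k * cartan (sph_sym phi) x y i j k)"
      by (simp add: mean_cartan_def fgi)
    show "mean_cartan_norm2 (sph_sym phi) x y = (\<Sum>i\<in>UNIV. \<Sum>j\<in>UNIV. Gi$i$j * mean_cartan (sph_sym phi) x y i * mean_cartan (sph_sym phi) x y j)"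
      by (simp add: mean_cartan_norm2_def fgi)
    show "\<And>i j. angular (sph_sym phi) x y i j = gmat (p*(p - s*p1)) (p*p1) (p1^2 + p*p2) s l d $ i $ j - (p *\<^sub>R l + p1 *\<^sub>R d)$i * (p *\<^sub>R l + p1 *\<^sub>R d)$j"
      by (simp add: angular_def fg lv G_def)
    show "mean_cartan_norm2 (sph_sym phi) x y \<noteq> 0" by (rule Nnz)
  qed
  have eqs: "inner x y / norm y = s" "phi (norm x) = f0" "dS phi (norm x) = f1" "dS (dS phi) (norm x) = f2"
    "dS (dS (dS phi)) (norm x) = f3" "(norm x)^2 - s^2 = d \<bullet> d"
    by (simp_all add: s_def Sf_def f0_def f1_def f2_def f3_def ddr)
  show "let F = sph_sym phi; n = real CARD('n); r = norm x; s = inner x y / norm y;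
         p = phi r s; p1 = dS phi r s; p2 = dS (dS phi) r s; p3 = dS (dS (dS phi)) r s;
         A = (p - s * p1) * p1 - s * p * p2;
         B = p - s * p1 + (r^2 - s^2) * p2;
         E = (r^2 - s^2) * ((p - s * p1) * p3 + 3 * s * p2^2);
         P = ((n + 1) * A * B) / ((n + 1) * A * B + E * p);
         Q = (E * p^2) / ((n + 1) * A * B * p + E * p^2);
         I = mean_cartan F x y; h = angular F x y
     in \<forall>i j k. cartan F x y i j k =
          P / (n + 1) * (h i j * I k + h j k * I i + h k i * I j)
          + Q / mean_cartan_norm2 F x y * I i * I j * I k"
    unfolding Let_def eqs using main[unfolded Let_def] unfolding p_def p1_def p2_def p3_def by blast
qed

end
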